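(* Let $n\ge 2$, let $\Gamma\in\mathcal{M}_n(\mathbb{R})$ be symmetric with entries in $[0,1]$, zero diagonal, and at least one strictly positive off-diagonal entry in each row, such that the weighted graph with weight matrix $\Gamma$ is connected. Let $\boldsymbol{\eta}=\Gamma\mathbf{1}_n$, $L=\operatorname{diag}(\boldsymbol{\eta})-\Gamma$, let $\lambda,\mu>0$, $A=\lambda\mathsf{I}_n+\mu L$, and let $\mathsf{P}_a\coloneqq\operatorname{diag}(A)=\lambda\mathsf{I}_n+\mu\operatorname{diag}(\boldsymbol{\eta})$. Then every eigenvalue $\theta$ of $\mathsf{P}_a^{-1}A$ satisfies \[ \frac{\lambda}{\lambda+\mu\max\boldsymbol{\eta}}\le\theta\le\min\Big\{2,\ \frac{n}{n-1}\,\frac{\rho(L)}{a(L)}\Big\}. \]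
   Context: $\mathbf{1}_n$ is the all-ones vector, $\mathsf{I}_n$ the identity. $\rho(L)$ is the spectral radius (largest eigenvalue) of $L$, and $a(L)$ is the algebraic connectivity of $L$, i.e. its second smallest eigenvalue counted with multiplicity (positive since the graph is connected). *)

theory Defs
  imports "Jordan_Normal_Form.Spectral_Radius"
begin

definition weight_graph_connected :: "nat \<Rightarrow> real mat \<Rightarrow> bool" where
  "weight_graph_connected n W =
     (\<forall>i<n. \<forall>j<n. (i, j) \<in> {(k, l). k < n \<and> l < n \<and> W $$ (k, l) > 0}\<^sup>*)"

definition sorted_real_eigenvalues :: "real mat \<Rightarrow> real list" where
  "sorted_real_eigenvalues M =
     (SOME es. sorted es \<and> char_poly M = (\<Prod>e\<leftarrow>es. [:- e, 1:]))"

definition algebraic_connectivity :: "real mat \<Rightarrow> real" where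
  "algebraic_connectivity M = sorted_real_eigenvalues M ! 1"

end

theory Submission
  imports Defs "HOL-Analysis.Function_Topology"
begin


definition qf :: "real mat \<Rightarrow> nat \<Rightarrow> (nat \<Rightarrow> real) \<Rightarrow> real" where
  "qf N n x = (\<Sum>i<n. \<Sum>j<n. x i * N $$ (i,j) * x j)"
definition sq :: "nat \<Rightarrow> (nat \<Rightarrow> real) \<Rightarrow> real" where
  "sq n x = (\<Sum>i<n. x i ^ 2)"

lemma exists_min_sphere:
  assumes n: "n > 0"
  shows "\<exists>x0. sq n x0 = 1 \<and> (\<forall>y. sq n y = 1 \<longrightarrow> qf N n x0 \<le> qf N n y)"
proof -
  let ?X = "product_topology (\<lambda>_. euclideanreal) {..<n}"
  let ?K = "{x \<in> topspace ?X. sq n x = 1}"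
  have cs: "continuous_map ?X euclideanreal (sq n)"
    unfolding sq_def by (intro continuous_intros) auto
  have cq: "continuous_map ?X euclideanreal (qf N n)"
    unfolding qf_def by (intro continuous_intros) auto
  have cl: "closedin ?X ?K"
    using closedin_continuous_map_preimage[OF cs, of "{1}"] by (auto simp: vimage_def Collect_conj_eq)
  have sub: "?K \<subseteq> PiE {..<n} (\<lambda>_. {-1..1})"
  proof
    fix x assume x: "x \<in> ?K"
    then have ext: "x \<in> PiE {..<n} (\<lambda>_. UNIV)" by simp
    have "\<bar>x i\<bar> \<le> 1" if i: "i < n" for i
    proof -
      have "x i ^ 2 \<le> sq n x" unfolding sq_def
        by (rule member_le_sum[where f="\<lambda>i. x i ^ 2"]) (use i in auto)
      then have "x i ^ 2 \<le> 1 ^ 2" using x by simp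
      then show ?thesis using abs_le_square_iff[of "x i" 1] by simp
    qed
    then show "x \<in> PiE {..<n} (\<lambda>_. {-1..1})" using ext by (auto simp: PiE_iff abs_le_iff)
  qed
  have cpt0: "compactin ?X (PiE {..<n} (\<lambda>_. {-1..1}))"
    by (subst compactin_PiE) auto
  have cpt: "compactin ?X ?K" by (rule closed_compactin[OF cpt0 sub cl])
  have "compact (qf N n ` ?K)"
    using image_compactin[OF cpt cq] by simp
  moreover have ne: "?K \<noteq> {}"
  proof -
    let ?e = "\<lambda>i. if i = 0 then (1::real) else 0"
    let ?e' = "restrict ?e {..<n}"
    have "sq n ?e' = (\<Sum>i<n. if i = 0 then 1 else 0)" unfolding sq_def by (rule sum.cong) auto
    also have "\<dots> = 1" using n by (simp add: sum.delta)
    finally have "sq n ?e' = 1" .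
    moreover have "?e' \<in> topspace ?X" by simp
    ultimately show ?thesis by blast
  qed
  ultimately obtain m where m: "m \<in> qf N n ` ?K" "\<forall>z \<in> qf N n ` ?K. m \<le> z"
    using compact_attains_inf[of "qf N n ` ?K"] by blast
  then obtain x0 where x0: "x0 \<in> ?K" "m = qf N n x0" by blast
  show ?thesis
  proof (intro exI conjI allI impI)
    show "sq n x0 = 1" using x0 by simp
    fix y assume y: "sq n y = 1"
    let ?y = "restrict y {..<n}"
    have "sq n ?y = 1" using y unfolding sq_def by simp
    moreover have "?y \<in> topspace ?X" by simp
    ultimately have "m \<le> qf N n ?y" using m by blast
    also have "qf N n ?y = qf N n y" unfolding qf_def by simp
    finally show "qf N n x0 \<le> qf N n y" using x0 by simp
  qed
qed

definition symm :: "real mat \<Rightarrow> nat \<Rightarrow> bool" where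
  "symm N n = (\<forall>i<n. \<forall>j<n. N $$ (i,j) = N $$ (j,i))"

lemma qf_scale: "qf N n (\<lambda>i. c * y i) = c^2 * qf N n y"
  unfolding qf_def by (simp add: sum_distrib_left power2_eq_square algebra_simps)

lemma sq_scale: "sq n (\<lambda>i. c * y i) = c^2 * sq n y"
  unfolding sq_def by (simp add: sum_distrib_left power_mult_distrib)

lemma sq_nonneg: "sq n y \<ge> 0"
  unfolding sq_def by (simp add: sum_nonneg)

lemma qf_expand:
  assumes "symm N n"
  shows "qf N n (\<lambda>i. x i + t * z i) = qf N n x + 2*t*(\<Sum>i<n. z i * (\<Sum>j<n. N$$(i,j) * x j)) + t^2 * qf N n z"
proof -
  have sw: "(\<Sum>i<n. \<Sum>j<n. x i * N $$ (i,j) * z j) = (\<Sum>i<n. z i * (\<Sum>j<n. N$$(i,j) * x j))"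
  proof -
    have "(\<Sum>i<n. \<Sum>j<n. x i * N $$ (i,j) * z j) = (\<Sum>j<n. \<Sum>i<n. x i * N $$ (i,j) * z j)"
      by (rule sum.swap)
    also have "\<dots> = (\<Sum>j<n. z j * (\<Sum>i<n. N$$(j,i) * x i))"
      using assms unfolding symm_def by (auto simp: sum_distrib_left algebra_simps intro!: sum.cong)
    finally show ?thesis .
  qed
  have "qf N n (\<lambda>i. x i + t * z i) = qf N n x + t * (\<Sum>i<n. \<Sum>j<n. x i * N $$ (i,j) * z j)
     + t * (\<Sum>i<n. z i * (\<Sum>j<n. N$$(i,j) * x j)) + t^2 * qf N n z"
    unfolding qf_def
    by (simp add: sum_distrib_left sum.distrib power2_eq_square algebra_simps)
  then show ?thesis using sw by simp
qed

lemma sq_expand: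
  shows "sq n (\<lambda>i. x i + t * z i) = sq n x + 2*t*(\<Sum>i<n. z i * x i) + t^2 * sq n z"
  unfolding sq_def
  by (simp add: sum_distrib_left sum.distrib power2_eq_square algebra_simps)

lemma var_min_fun:
  assumes n: "n > 0" and S: "symm N n"
  shows "\<exists>x0 s. sq n x0 = 1 \<and> (\<forall>i<n. (\<Sum>j<n. N$$(i,j) * x0 j) = s * x0 i) \<and> (\<forall>y. s * sq n y \<le> qf N n y)"
proof -
  obtain x0 where x0: "sq n x0 = 1" and mn: "\<And>y. sq n y = 1 \<Longrightarrow> qf N n x0 \<le> qf N n y"
    using exists_min_sphere[OF n, of N] by blast
  define s where "s = qf N n x0"
  have ge: "s * sq n y \<le> qf N n y" for y
  proof (cases "sq n y = 0")
    case True
    have "y i = 0" if "i < n" for i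
    proof -
      have "y i ^ 2 \<le> sq n y" unfolding sq_def
        by (rule member_le_sum[where f="\<lambda>i. y i ^ 2"]) (use that in auto)
      then show ?thesis using True by simp
    qed
    then have "qf N n y = 0" unfolding qf_def by simp
    then show ?thesis using True by simp
  next
    case False
    then have pos: "sq n y > 0" using sq_nonneg[of n y] by linarith
    define c where "c = 1 / sqrt (sq n y)"
    have c2: "c^2 * sq n y = 1" using pos unfolding c_def by (simp add: power_divide)
    have "sq n (\<lambda>i. c * y i) = 1" using c2 by (simp add: sq_scale)
    then have "s \<le> c^2 * qf N n y" using mn[of "\<lambda>i. c * y i"] by (simp add: qf_scale s_def)
    then have "s * sq n y \<le> c^2 * qf N n y * sq n y" using pos by (simp add: mult_right_mono)
    also have "\<dots> = qf N n y" using c2 by (simp add: algebra_simps)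
    finally show ?thesis .
  qed
  define h where "h y = qf N n y - s * sq n y" for y
  have h0: "h y \<ge> 0" for y using ge[of y] unfolding h_def by simp
  have hx0: "h x0 = 0" unfolding h_def s_def using x0 by simp
  define w where "w i = (\<Sum>j<n. N$$(i,j) * x0 j) - s * x0 i" for i
  define W where "W = (\<Sum>i<n. w i ^ 2)"
  have hexp: "h (\<lambda>i. x0 i + t * w i) = 2 * t * W + t^2 * h w" for t
  proof -
    have "h (\<lambda>i. x0 i + t * w i) = h x0 + 2*t*((\<Sum>i<n. w i * (\<Sum>j<n. N$$(i,j) * x0 j)) - s * (\<Sum>i<n. w i * x0 i)) + t^2 * h w"
      unfolding h_def qf_expand[OF S] sq_expand by (simp add: algebra_simps)
    also have "(\<Sum>i<n. w i * (\<Sum>j<n. N$$(i,j) * x0 j)) - s * (\<Sum>i<n. w i * x0 i) = W"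
      unfolding W_def w_def by (simp add: sum_distrib_left sum_subtractf[symmetric] power2_eq_square algebra_simps)
    finally show ?thesis using hx0 by simp
  qed
  have W0: "W = 0"
  proof (rule ccontr)
    assume "W \<noteq> 0"
    moreover have "W \<ge> 0" unfolding W_def by (simp add: sum_nonneg)
    ultimately have Wp: "W > 0" by simp
    define t where "t = - W / (h w + 1)"
    have hp: "h w + 1 > 0" using h0[of w] by simp
    have "0 \<le> 2 * t * W + t^2 * h w" using h0[of "\<lambda>i. x0 i + t * w i"] hexp[of t] by simp
    also have "2 * t * W + t^2 * h w = t * (W - t)"
    proof -
      have e: "t * (h w + 1) = -W" using hp by (simp add: t_def)
      have "2*t*W + t^2*h w - t*(W-t) = t*(t*(h w+1) + W)" by (simp add: algebra_simps power2_eq_square)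
      then show ?thesis using e by simp
    qed
    also have "\<dots> < 0"
    proof -
      have "t < 0" unfolding t_def using Wp hp by (simp add: divide_pos_pos)
      then show ?thesis using Wp by (intro mult_neg_pos) auto
    qed
    finally show False by simp
  qed
  have "w i = 0" if "i < n" for i
  proof -
    have "w i ^ 2 \<le> W" unfolding W_def
      by (rule member_le_sum[where f="\<lambda>i. w i ^ 2"]) (use that in auto)
    then show ?thesis using W0 by simp
  qed
  then show ?thesis using x0 ge unfolding w_def by (intro exI[of _ x0] exI[of _ s]) auto
qed




lemma mult_vec_fun:
  assumes N: "N \<in> carrier_mat n n" and x: "x \<in> carrier_vec n" and i: "i < n"
  shows "(N *\<^sub>v x) $ i = (\<Sum>j<n. N $$ (i,j) * x $ j)"
  using N x i by (auto simp: scalar_prod_def lessThan_atLeast0 intro!: sum.cong)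

lemma eig_qf:
  assumes N: "N \<in> carrier_mat n n" and v: "v \<in> carrier_vec n" and e: "N *\<^sub>v v = e \<cdot>\<^sub>v v"
  shows "qf N n (\<lambda>i. v $ i) = e * sq n (\<lambda>i. v $ i)"
proof -
  have "qf N n (\<lambda>i. v $ i) = (\<Sum>i<n. v $ i * (N *\<^sub>v v) $ i)"
    unfolding qf_def using N v by (auto simp del: index_mult_mat_vec simp: mult_vec_fun[OF N v] sum_distrib_left algebra_simps intro!: sum.cong)
  also have "\<dots> = (\<Sum>i<n. v $ i * (e * v $ i))" using e v by (auto intro!: sum.cong)
  also have "\<dots> = e * sq n (\<lambda>i. v $ i)" unfolding sq_def by (simp add: sum_distrib_left power2_eq_square algebra_simps)
  finally show ?thesis .
qed

lemma sq_pos_vec: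
  assumes v: "v \<in> carrier_vec n" and nz: "v \<noteq> 0\<^sub>v n"
  shows "sq n (\<lambda>i. v $ i) > 0"
proof -
  from nz v obtain k where k: "k < n" "v $ k \<noteq> 0" by (metis eq_vecI index_zero_vec(1) index_zero_vec(2) carrier_vecD)
  have "v $ k ^ 2 \<le> sq n (\<lambda>i. v $ i)" unfolding sq_def
    by (rule member_le_sum[where f="\<lambda>i. v $ i ^ 2"]) (use k in auto)
  moreover have "v $ k ^ 2 > 0" using k by simp
  ultimately show ?thesis by linarith
qed

lemma var_min:
  assumes N: "N \<in> carrier_mat n n" and n: "n > 0" and S: "symm N n"
  shows "\<exists>s. eigenvalue N s \<and> (\<forall>y. s * sq n y \<le> qf N n y)"
proof -
  obtain x0 s where x0: "sq n x0 = 1" and ev: "\<forall>i<n. (\<Sum>j<n. N$$(i,j) * x0 j) = s * x0 i"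
    and ge: "\<forall>y. s * sq n y \<le> qf N n y"
    using var_min_fun[OF n S] by blast
  let ?v = "vec n x0"
  have v: "?v \<in> carrier_vec n" by simp
  have "N *\<^sub>v ?v = s \<cdot>\<^sub>v ?v"
    by (rule eq_vecI) (use N ev in \<open>auto simp del: index_mult_mat_vec simp: mult_vec_fun[OF N]\<close>)
  moreover have "?v \<noteq> 0\<^sub>v n"
  proof
    assume "?v = 0\<^sub>v n"
    then have "\<forall>i<n. x0 i = 0" by (metis index_vec index_zero_vec(1))
    then have "sq n x0 = 0" unfolding sq_def by simp
    then show False using x0 by simp
  qed
  ultimately have "eigenvector N ?v s" unfolding eigenvector_def using N by auto
  then show ?thesis using ge unfolding eigenvalue_def by blast
qed

lemma root_psd:
  assumes N: "N \<in> carrier_mat n n" and psd: "\<forall>y. qf N n y \<ge> 0"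
    and r: "poly (char_poly N) e = 0"
  shows "e \<ge> 0"
proof -
  from r have "eigenvalue N e" using eigenvalue_root_char_poly[OF N] by simp
  then obtain v where "eigenvector N v e" unfolding eigenvalue_def by blast
  then have v: "v \<in> carrier_vec n" "v \<noteq> 0\<^sub>v n" "N *\<^sub>v v = e \<cdot>\<^sub>v v" using N unfolding eigenvector_def by auto
  have "e * sq n (\<lambda>i. v $ i) \<ge> 0" using eig_qf[OF N v(1) v(3)] psd by metis
  with sq_pos_vec[OF v(1,2)] show ?thesis by (simp add: zero_le_mult_iff)
qed

lemma root_pd:
  assumes N: "N \<in> carrier_mat n n" and pd: "\<forall>y. (\<exists>i<n. y i \<noteq> 0) \<longrightarrow> qf N n y > 0"
    and r: "poly (char_poly N) e = 0"
  shows "e > 0"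
proof -
  from r have "eigenvalue N e" using eigenvalue_root_char_poly[OF N] by simp
  then obtain v where "eigenvector N v e" unfolding eigenvalue_def by blast
  then have v: "v \<in> carrier_vec n" "v \<noteq> 0\<^sub>v n" "N *\<^sub>v v = e \<cdot>\<^sub>v v" using N unfolding eigenvector_def by auto
  from v obtain k where k: "k < n" "v $ k \<noteq> 0" by (metis eq_vecI index_zero_vec(1) index_zero_vec(2) carrier_vecD)
  have "e * sq n (\<lambda>i. v $ i) > 0" using eig_qf[OF N v(1) v(3)] pd k by metis
  with sq_pos_vec[OF v(1,2)] show ?thesis by (simp add: zero_less_mult_iff)
qed

lemma cnj_mult_self: "cnj z * z = complex_of_real ((cmod z)^2)"
  by (metis complex_norm_square mult.commute)

lemma complex_eig_real:
  assumes N: "N \<in> carrier_mat n n" and S: "symm N n"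
    and ev: "eigenvalue (map_mat complex_of_real N) a"
  shows "a = complex_of_real (Re a)"
proof -
  let ?N = "map_mat complex_of_real N"
  from ev obtain v where "eigenvector ?N v a" unfolding eigenvalue_def by blast
  then have v: "v \<in> carrier_vec n" "v \<noteq> 0\<^sub>v n" "?N *\<^sub>v v = a \<cdot>\<^sub>v v" using N unfolding eigenvector_def by auto
  from v obtain k where k: "k < n" "v $ k \<noteq> 0" by (metis eq_vecI index_zero_vec(1) index_zero_vec(2) carrier_vecD)
  define z where "z = (\<Sum>i<n. \<Sum>j<n. cnj (v $ i) * of_real (N $$ (i,j)) * v $ j)"
  define T where "T = (\<Sum>i<n. cnj (v $ i) * v $ i)"
  have Nv: "(?N *\<^sub>v v) $ i = (\<Sum>j<n. of_real (N $$ (i,j)) * v $ j)" if "i < n" for i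
    using N v(1) that by (auto simp: scalar_prod_def lessThan_atLeast0 intro!: sum.cong)
  have z1: "z = a * T"
  proof -
    have "z = (\<Sum>i<n. cnj (v $ i) * (?N *\<^sub>v v) $ i)"
      unfolding z_def by (auto simp: Nv sum_distrib_left algebra_simps intro!: sum.cong)
    also have "\<dots> = (\<Sum>i<n. cnj (v $ i) * (a * v $ i))"
    proof (rule sum.cong)
      fix i assume "i \<in> {..<n}"
      then have "(?N *\<^sub>v v) $ i = a * v $ i" using v(3) v(1) by (metis index_smult_vec(1) carrier_vecD lessThan_iff)
      then show "cnj (v $ i) * (?N *\<^sub>v v) $ i = cnj (v $ i) * (a * v $ i)" by simp
    qed simp
    finally show ?thesis unfolding T_def by (simp add: sum_distrib_left algebra_simps)
  qed
  have z2: "cnj z = z"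
  proof -
    have "cnj z = (\<Sum>i<n. \<Sum>j<n. v $ i * of_real (N $$ (i,j)) * cnj (v $ j))"
      unfolding z_def by simp
    also have "\<dots> = (\<Sum>j<n. \<Sum>i<n. v $ i * of_real (N $$ (i,j)) * cnj (v $ j))" by (rule sum.swap)
    also have "\<dots> = z" unfolding z_def using S unfolding symm_def by (auto intro!: sum.cong simp: algebra_simps)
    finally show ?thesis .
  qed
  have T: "T = of_real (\<Sum>i<n. (cmod (v $ i))^2)"
    unfolding T_def of_real_sum by (rule sum.cong[OF refl]) (rule cnj_mult_self)
  have Tpos: "(\<Sum>i<n. (cmod (v $ i))^2) > 0"
  proof -
    have "(cmod (v $ k))^2 \<le> (\<Sum>i<n. (cmod (v $ i))^2)"
      by (rule member_le_sum[where f="\<lambda>i. (cmod (v $ i))^2"]) (use k in auto)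
    moreover have "(cmod (v $ k))^2 > 0" using k by simp
    ultimately show ?thesis by linarith
  qed
  have "cnj a * T = a * T" using z1 z2 T by (metis complex_cnj_complex_of_real complex_cnj_mult)
  moreover have "T \<noteq> 0" using Tpos T by (metis less_irrefl of_real_eq_0_iff)
  ultimately have "cnj a = a" by simp
  then show ?thesis by (metis Reals_cnj_iff complex_is_Real_iff of_real_Re)
qed

lemma prod_list_sort_lin: "(\<Prod>e\<leftarrow>sort xs. ([:- e, 1:] :: real poly)) = (\<Prod>e\<leftarrow>xs. [:- e, 1:])"
proof -
  have "(\<Prod>e\<leftarrow>sort xs. ([:- e, 1:] :: real poly)) = prod_mset (mset (map (\<lambda>e. [:- e, 1:]) (sort xs)))"
    by (simp only: prod_mset_prod_list)
  also have "\<dots> = prod_mset (mset (map (\<lambda>e. [:- e, 1:]) xs))" by simp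
  also have "\<dots> = (\<Prod>e\<leftarrow>xs. [:- e, 1:])" by (simp only: prod_mset_prod_list)
  finally show ?thesis .
qed

lemma poly_lin_prod_zero: "poly (\<Prod>a\<leftarrow>as. [:- a, 1:]) x = 0 \<longleftrightarrow> x \<in> set as"
  for x :: "'a :: idom"
  by (induct as) auto

lemma real_split:
  assumes N: "N \<in> carrier_mat n n" and S: "symm N n"
  shows "\<exists>es. sorted es \<and> length es = n \<and> char_poly N = (\<Prod>e\<leftarrow>es. [:- e, 1:])"
proof -
  interpret rp: map_poly_inj_idom_hom "complex_of_real" ..
  let ?N = "map_mat complex_of_real N"
  have Nc: "?N \<in> carrier_mat n n" using N by simp
  obtain as where as: "char_poly ?N = (\<Prod>a\<leftarrow>as. [:- a, 1:])" "length as = n"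
    using char_poly_factorized[OF Nc] by blast
  have re: "a = of_real (Re a)" if "a \<in> set as" for a
  proof -
    have "poly (char_poly ?N) a = 0" using that as(1) poly_lin_prod_zero by metis
    then have "eigenvalue ?N a" using eigenvalue_root_char_poly[OF Nc] by simp
    then show ?thesis using complex_eig_real[OF N S] by blast
  qed
  define es where "es = sort (map Re as)"
  have "map_poly complex_of_real (\<Prod>e\<leftarrow>es. [:- e, 1:]) = map_poly complex_of_real (\<Prod>e\<leftarrow>map Re as. [:- e, 1:])"
    unfolding es_def prod_list_sort_lin ..
  also have "\<dots> = (\<Prod>e\<leftarrow>map Re as. [:- of_real e, 1:])"
    by (simp add: rp.hom_prod_list o_def)
  also have "\<dots> = (\<Prod>a\<leftarrow>as. [:- a, 1:])"
  proof -
    have "map (\<lambda>e. [:- complex_of_real e, 1:]) (map Re as) = map (\<lambda>a. [:- a, 1:]) as"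
      using re by (auto simp: map_eq_conv)
    then show ?thesis by metis
  qed
  also have "\<dots> = map_poly complex_of_real (char_poly N)"
    using as(1) of_real_hom.char_poly_hom[OF N] by metis
  finally have "char_poly N = (\<Prod>e\<leftarrow>es. [:- e, 1:])" by (simp add: rp.eq_iff)
  moreover have "length es = n" unfolding es_def using as(2) by simp
  moreover have "sorted es" unfolding es_def by simp
  ultimately show ?thesis by blast
qed




definition etaG :: "real mat \<Rightarrow> nat \<Rightarrow> real vec" where
  "etaG G n = G *\<^sub>v vec n (\<lambda>_. 1)"
definition LapG :: "real mat \<Rightarrow> nat \<Rightarrow> real mat" where
  "LapG G n = mat_diag n (\<lambda>i. etaG G n $ i) - G"

context
  fixes n :: nat and G :: "real mat"
  assumes Gc: "G \<in> carrier_mat n n" and Gs: "transpose_mat G = G"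
    and Gnn: "\<forall>i<n. \<forall>j<n. 0 \<le> G $$ (i,j)"
begin

lemma Gsym: "i < n \<Longrightarrow> j < n \<Longrightarrow> G $$ (i,j) = G $$ (j,i)"
  by (metis Gc Gs carrier_matD index_transpose_mat(1))

lemma eta_i: "i < n \<Longrightarrow> etaG G n $ i = (\<Sum>j<n. G $$ (i,j))"
  unfolding etaG_def using Gc by (auto simp: scalar_prod_def lessThan_atLeast0 intro!: sum.cong)

lemma L_carrier: "LapG G n \<in> carrier_mat n n"
  unfolding LapG_def by (rule minus_carrier_mat[OF Gc])

lemma L_idx: "i < n \<Longrightarrow> j < n \<Longrightarrow> LapG G n $$ (i,j) = (if i = j then etaG G n $ i else 0) - G $$ (i,j)"
  unfolding LapG_def mat_diag_def using Gc by auto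

lemma L_symm: "symm (LapG G n) n"
  unfolding symm_def using L_idx Gsym by auto

lemma qf_L_eta: "qf (LapG G n) n x = (\<Sum>i<n. etaG G n $ i * x i ^ 2) - (\<Sum>i<n. \<Sum>j<n. x i * G $$ (i,j) * x j)"
proof -
  have "qf (LapG G n) n x = (\<Sum>i<n. \<Sum>j<n. x i * ((if i = j then etaG G n $ i else 0) - G $$ (i,j)) * x j)"
    unfolding qf_def by (auto simp: L_idx intro!: sum.cong)
  also have "\<dots> = (\<Sum>i<n. \<Sum>j<n. (if i = j then etaG G n $ i * x i ^ 2 else 0) - x i * G $$ (i,j) * x j)"
    by (auto simp: algebra_simps power2_eq_square intro!: sum.cong)
  also have "\<dots> = (\<Sum>i<n. etaG G n $ i * x i ^ 2) - (\<Sum>i<n. \<Sum>j<n. x i * G $$ (i,j) * x j)"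
    by (simp add: sum_subtractf sum.delta)
  finally show ?thesis .
qed

lemma T1_eq: "(\<Sum>i<n. \<Sum>j<n. G $$ (i,j) * x i ^ 2) = (\<Sum>i<n. etaG G n $ i * x i ^ 2)"
  by (auto simp: eta_i sum_distrib_right intro!: sum.cong)

lemma T2_eq: "(\<Sum>i<n. \<Sum>j<n. G $$ (i,j) * x j ^ 2) = (\<Sum>i<n. etaG G n $ i * x i ^ 2)"
proof -
  have "(\<Sum>i<n. \<Sum>j<n. G $$ (i,j) * x j ^ 2) = (\<Sum>j<n. \<Sum>i<n. G $$ (i,j) * x j ^ 2)"
    by (rule sum.swap)
  also have "\<dots> = (\<Sum>j<n. \<Sum>i<n. G $$ (j,i) * x j ^ 2)"
    using Gsym by (auto intro!: sum.cong)
  finally show ?thesis using T1_eq by simp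
qed

lemma qf_L: "qf (LapG G n) n x = (\<Sum>i<n. \<Sum>j<n. G $$ (i,j) * (x i - x j)^2) / 2"
proof -
  have "(\<Sum>i<n. \<Sum>j<n. G $$ (i,j) * (x i - x j)^2) =
     (\<Sum>i<n. \<Sum>j<n. G $$ (i,j) * x i ^ 2) + (\<Sum>i<n. \<Sum>j<n. G $$ (i,j) * x j ^ 2) - 2 * (\<Sum>i<n. \<Sum>j<n. x i * G $$ (i,j) * x j)"
    by (simp add: sum.distrib sum_subtractf sum_distrib_left power2_eq_square algebra_simps)
  then show ?thesis using T1_eq T2_eq qf_L_eta by simp
qed

lemma qf_L_nonneg: "qf (LapG G n) n x \<ge> 0"
  unfolding qf_L using Gnn by (auto intro!: sum_nonneg)

lemma qf_L_le: "qf (LapG G n) n x \<le> 2 * (\<Sum>i<n. etaG G n $ i * x i ^ 2)"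
proof -
  have "(\<Sum>i<n. \<Sum>j<n. G $$ (i,j) * (x i - x j)^2) \<le> (\<Sum>i<n. \<Sum>j<n. G $$ (i,j) * (2 * x i ^ 2 + 2 * x j ^ 2))"
  proof (intro sum_mono mult_left_mono)
    fix i j assume "i \<in> {..<n}" "j \<in> {..<n}"
    then show "0 \<le> G $$ (i,j)" using Gnn by auto
    show "(x i - x j)^2 \<le> 2 * x i ^ 2 + 2 * x j ^ 2"
      using sum_squares_ge_zero[of "x i + x j" 0] by (simp add: power2_eq_square algebra_simps)
  qed
  also have "\<dots> = 2 * (\<Sum>i<n. \<Sum>j<n. G $$ (i,j) * x i ^ 2) + 2 * (\<Sum>i<n. \<Sum>j<n. G $$ (i,j) * x j ^ 2)"
    by (simp add: sum.distrib sum_distrib_left algebra_simps)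
  finally show ?thesis unfolding qf_L T1_eq T2_eq by simp
qed

lemma qf_L_zero:
  assumes conn: "weight_graph_connected n G" and q: "qf (LapG G n) n x = 0"
  shows "\<forall>i<n. \<forall>j<n. x i = x j"
proof -
  have s0: "(\<Sum>i<n. \<Sum>j<n. G $$ (i,j) * (x i - x j)^2) = 0" using q unfolding qf_L by simp
  have edge: "x i = x j" if "i < n" "j < n" "G $$ (i,j) > 0" for i j
  proof -
    have nn: "0 \<le> (\<Sum>j<n. G $$ (k,j) * (x k - x j)^2)" if "k \<in> {..<n}" for k
      using Gnn that by (auto intro!: sum_nonneg)
    then have "(\<Sum>j<n. G $$ (i,j) * (x i - x j)^2) = 0"
      using s0 sum_nonneg_eq_0_iff[OF finite_lessThan nn] that(1) by simp
    moreover have nn2: "0 \<le> G $$ (i,k) * (x i - x k)^2" if "k \<in> {..<n}" for k using Gnn that \<open>i < n\<close> by auto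
    ultimately have "G $$ (i,j) * (x i - x j)^2 = 0"
      using sum_nonneg_eq_0_iff[OF finite_lessThan nn2] that(2) by simp
    then show ?thesis using that by simp
  qed
  show ?thesis
  proof (intro allI impI)
    fix i j assume ij: "i < n" "j < n"
    then have "(i, j) \<in> {(k, l). k < n \<and> l < n \<and> G $$ (k, l) > 0}\<^sup>*"
      using conn unfolding weight_graph_connected_def by blast
    then show "x i = x j"
    proof (induction rule: rtrancl_induct)
      case base then show ?case by simp
    next
      case (step k l) then show ?case using edge by auto
    qed
  qed
qed

end



lemma sum_skip_index:
  fixes f :: "nat \<Rightarrow> real"
  assumes i: "i < Suc m" and fi: "f i = 0"
  shows "(\<Sum>a<Suc m. f a) = (\<Sum>k<m. f (insert_index i k))"
proof -
  have "(\<Sum>a<Suc m. f a) = (\<Sum>a\<in>{0..<Suc m} - {i}. f a)"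
    using i fi by (simp add: sum_diff1 lessThan_atLeast0)
  also have "{0..<Suc m} - {i} = insert_index i ` {0..<m}" using insert_index_image[OF i] by simp
  also have "sum f (insert_index i ` {0..<m}) = (\<Sum>k\<in>{0..<m}. f (insert_index i k))"
    by (subst sum.reindex[OF insert_index_inj_on]) simp
  finally show ?thesis by (simp add: lessThan_atLeast0)
qed

lemma poly_lin_prod_0: "poly (\<Prod>e\<leftarrow>xs. [:- e, 1:]) 0 = (-1)^length xs * (\<Prod>e\<leftarrow>xs. e)"
  for xs :: "real list"
  by (induct xs) auto

lemma prod_list_pos: "(\<forall>e\<in>set xs. e > 0) \<Longrightarrow> (\<Prod>e\<leftarrow>xs. e) > (0::real)"
  by (induct xs) auto

lemma sum_ind: fixes n i :: nat shows "(\<Sum>j<n. f j * (if j = i then 1 else (0::real))) = (if i < n then f i else 0)"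
proof -
  have "(\<Sum>j<n. f j * (if j = i then 1 else (0::real))) = (\<Sum>j<n. if j = i then f j else 0)"
    by (rule sum.cong) auto
  then show ?thesis by (simp add: sum.delta)
qed

context
  fixes n :: nat and G :: "real mat"
  assumes Gc: "G \<in> carrier_mat n n" and Gs: "transpose_mat G = G"
    and Gnn: "\<forall>i<n. \<forall>j<n. 0 \<le> G $$ (i,j)"
    and Gd: "\<forall>i<n. G $$ (i,i) = 0"
    and conn: "weight_graph_connected n G"
    and n2: "n \<ge> 2"
begin

abbreviation "LLap \<equiv> LapG G n"
abbreviation "ESv \<equiv> sorted_real_eigenvalues LLap"

lemma Lc: "LLap \<in> carrier_mat n n" using L_carrier[OF Gc Gs Gnn] .
lemma Ls: "symm LLap n" using L_symm[OF Gc Gs Gnn] .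
lemma Lidx: "i < n \<Longrightarrow> j < n \<Longrightarrow> LLap $$ (i,j) = (if i = j then etaG G n $ i else 0) - G $$ (i,j)"
  using L_idx[OF Gc Gs Gnn] .
lemma Lpsd: "qf LLap n y \<ge> 0" using qf_L_nonneg[OF Gc Gs Gnn] .
lemma Lzero: "qf LLap n y = 0 \<Longrightarrow> \<forall>i<n. \<forall>j<n. y i = y j" using qf_L_zero[OF Gc Gs Gnn conn] .

lemma row_sum0: "i < n \<Longrightarrow> (\<Sum>j<n. LLap $$ (i,j)) = 0"
  by (simp add: Lidx sum_subtractf sum.delta eta_i[OF Gc Gs Gnn])

lemma col_sum0: "j < n \<Longrightarrow> (\<Sum>i<n. LLap $$ (i,j)) = 0"
proof -
  assume j: "j < n"
  have "(\<Sum>i<n. LLap $$ (i,j)) = (\<Sum>i<n. LLap $$ (j,i))"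
    using Ls j unfolding symm_def by (auto intro!: sum.cong)
  then show ?thesis using row_sum0[OF j] by simp
qed

lemma es_props: "sorted ESv \<and> char_poly LLap = (\<Prod>e\<leftarrow>ESv. [:- e, 1:]) \<and> length ESv = n"
proof -
  obtain xs where "sorted xs \<and> length xs = n \<and> char_poly LLap = (\<Prod>e\<leftarrow>xs. [:- e, 1:])"
    using real_split[OF Lc Ls] by blast
  then have ex: "\<exists>xs. sorted xs \<and> char_poly LLap = (\<Prod>e\<leftarrow>xs. [:- e, 1:])" by blast
  have P: "sorted ESv \<and> char_poly LLap = (\<Prod>e\<leftarrow>ESv. [:- e, 1:])"
    unfolding sorted_real_eigenvalues_def by (rule someI_ex[OF ex])
  have "length ESv = degree (\<Prod>e\<leftarrow>ESv. [:- e, 1:])" by (simp add: degree_linear_factors)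
  also have "\<dots> = n" using P degree_monic_char_poly[OF Lc] by simp
  finally show ?thesis using P by simp
qed

lemma es_sorted: "sorted ESv" and es_cp: "char_poly LLap = (\<Prod>e\<leftarrow>ESv. [:- e, 1:])" and es_len: "length ESv = n"
  using es_props by auto

lemma eig_in_es: "eigenvalue LLap e \<longleftrightarrow> e \<in> set ESv"
  using eigenvalue_root_char_poly[OF Lc] es_cp poly_lin_prod_zero by metis

lemma es_nonneg: "e \<in> set ESv \<Longrightarrow> e \<ge> 0"
  using root_psd[OF Lc] Lpsd eig_in_es eigenvalue_root_char_poly[OF Lc] by metis

lemma zero_in_es: "0 \<in> set ESv"
proof -
  let ?v = "vec n (\<lambda>_. 1::real)"
  have "LLap *\<^sub>v ?v = 0 \<cdot>\<^sub>v ?v"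
  proof (rule eq_vecI)
    fix i assume "i < dim_vec (0 \<cdot>\<^sub>v ?v)"
    then have i: "i < n" by simp
    have "(LLap *\<^sub>v ?v) $ i = (\<Sum>j<n. LLap $$ (i,j) * ?v $ j)" using mult_vec_fun[OF Lc _ i] by simp
    also have "\<dots> = (\<Sum>j<n. LLap $$ (i,j))" by simp
    finally show "(LLap *\<^sub>v ?v) $ i = (0 \<cdot>\<^sub>v ?v) $ i" using row_sum0[OF i] i by simp
  qed (use Lc in simp)
  moreover have "?v \<noteq> 0\<^sub>v n"
  proof
    assume "?v = 0\<^sub>v n"
    then have "?v $ 0 = (0\<^sub>v n :: real vec) $ 0" by simp
    then show False using n2 by simp
  qed
  ultimately have "eigenvalue LLap 0" unfolding eigenvalue_def eigenvector_def using Lc by (intro exI[of _ ?v]) auto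
  then show ?thesis using eig_in_es by simp
qed

lemma es0: "ESv ! 0 = 0"
proof -
  obtain k where k: "k < length ESv" "ESv ! k = 0" using zero_in_es by (metis in_set_conv_nth)
  have "ESv ! 0 \<le> ESv ! k" using sorted_nth_mono[OF es_sorted _ k(1)] by simp
  moreover have "ESv ! 0 \<ge> 0" using es_nonneg es_len n2 by simp
  ultimately show ?thesis using k by simp
qed


lemma minor_pd:
  assumes i: "i < n"
  shows "symm (mat_delete LLap i i) (n-1)" and "mat_delete LLap i i \<in> carrier_mat (n-1) (n-1)"
    and "\<forall>y. (\<exists>k<n-1. y k \<noteq> 0) \<longrightarrow> qf (mat_delete LLap i i) (n-1) y > 0"
proof -
  obtain m where m: "n = Suc m" using n2 by (cases n) auto
  have idx: "mat_delete LLap i i $$ (k,l) = LLap $$ (insert_index i k, insert_index i l)" if "k < m" "l < m" for k l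
    using that Lc m unfolding mat_delete_def insert_index_def by auto
  have ins_lt: "insert_index i k < n" if "k < m" for k using that m unfolding insert_index_def by auto
  show "mat_delete LLap i i \<in> carrier_mat (n-1) (n-1)" using mat_delete_carrier[OF Lc] .
  show "symm (mat_delete LLap i i) (n-1)"
    unfolding symm_def
  proof (intro allI impI)
    fix k l assume "k < n-1" "l < n-1"
    then have kl: "k < m" "l < m" using m by auto
    show "mat_delete LLap i i $$ (k, l) = mat_delete LLap i i $$ (l, k)"
      using Ls ins_lt[OF kl(1)] ins_lt[OF kl(2)] unfolding symm_def idx[OF kl] idx[OF kl(2,1)] by simp
  qed
  show "\<forall>y. (\<exists>k<n-1. y k \<noteq> 0) \<longrightarrow> qf (mat_delete LLap i i) (n-1) y > 0"
  proof (intro allI impI)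
    fix y :: "nat \<Rightarrow> real" assume "\<exists>k<n-1. y k \<noteq> 0"
    then obtain k where k: "k < m" "y k \<noteq> 0" using m by auto
    define z where "z a = (if a < i then y a else if a = i then 0 else y (a - 1))" for a
    have zi: "z (insert_index i k) = y k" for k unfolding z_def insert_index_def by auto
    have bnd: "{..<n} = {..<Suc m}" using m by simp
    have bnd2: "{..<n-1} = {..<m}" using m by simp
    have "qf LLap n z = (\<Sum>a<Suc m. \<Sum>b<Suc m. z a * LLap $$ (a,b) * z b)" unfolding qf_def bnd ..
    also have "\<dots> = (\<Sum>a<m. \<Sum>b<Suc m. z (insert_index i a) * LLap $$ (insert_index i a,b) * z b)"
      by (rule sum_skip_index) (use i m in \<open>auto simp: z_def\<close>)
    also have "\<dots> = (\<Sum>a<m. \<Sum>b<m. z (insert_index i a) * LLap $$ (insert_index i a,insert_index i b) * z (insert_index i b))"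
      by (rule sum.cong[OF refl], rule sum_skip_index) (use i m in \<open>auto simp: z_def\<close>)
    also have "\<dots> = qf (mat_delete LLap i i) (n-1) y"
      unfolding qf_def bnd2 by (auto simp: zi idx intro!: sum.cong)
    finally have eq: "qf LLap n z = qf (mat_delete LLap i i) (n-1) y" .
    have "qf LLap n z \<noteq> 0"
    proof
      assume "qf LLap n z = 0"
      then have "z (insert_index i k) = z i" using Lzero ins_lt[OF k(1)] i by blast
      then show False using zi k unfolding z_def by simp
    qed
    then show "qf (mat_delete LLap i i) (n-1) y > 0" using Lpsd[of z] eq by simp
  qed
qed

lemma es1_pos: "ESv ! 1 > 0"
proof (rule ccontr)
  assume "\<not> ESv ! 1 > 0"
  moreover have "ESv ! 1 \<ge> 0" using es_nonneg es_len n2 by simp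
  ultimately have e1: "ESv ! 1 = 0" by simp
  have "ESv = ESv ! 0 # ESv ! 1 # drop 2 ESv"
    using Cons_nth_drop_Suc[of 0 ESv] Cons_nth_drop_Suc[of 1 ESv] es_len n2 by (simp add: numeral_2_eq_2)
  then have "char_poly LLap = [:0, 1:] * ([:0, 1:] * (\<Prod>e\<leftarrow>drop 2 ESv. [:- e, 1:]))"
    using es_cp e1 es0 by (metis (no_types, lifting) list.simps(9) minus_zero prod_list.Cons)
  then have z: "poly (pderiv (char_poly LLap)) 0 = 0" by (simp add: pderiv_pCons)
  have "poly (pderiv (char_poly LLap)) 0 = (\<Sum>i<n. poly (char_poly (mat_delete LLap i i)) 0)"
    by (simp add: pderiv_char_poly[OF Lc] poly_sum)
  also have "\<dots> = (\<Sum>i<n. (-1)^(n-1) * (SOME P. P > 0 \<and> poly (char_poly (mat_delete LLap i i)) 0 = (-1)^(n-1) * P))"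
  proof (rule sum.cong[OF refl])
    fix i assume "i \<in> {..<n}"
    then have i: "i < n" by simp
    note M = minor_pd[OF i]
    obtain xs where xs: "sorted xs" "length xs = n - 1" "char_poly (mat_delete LLap i i) = (\<Prod>e\<leftarrow>xs. [:- e, 1:])"
      using real_split[OF M(2) M(1)] by blast
    have "\<forall>e\<in>set xs. e > 0"
      using root_pd[OF M(2) M(3)] xs(3) poly_lin_prod_zero by metis
    then have "\<exists>P. P > 0 \<and> poly (char_poly (mat_delete LLap i i)) 0 = (-1)^(n-1) * P"
      using xs prod_list_pos poly_lin_prod_0 by metis
    then show "poly (char_poly (mat_delete LLap i i)) 0 = (-1)^(n-1) * (SOME P. P > 0 \<and> poly (char_poly (mat_delete LLap i i)) 0 = (-1)^(n-1) * P)"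
      by (rule someI2_ex) simp
  qed
  also have "\<dots> = (-1)^(n-1) * (\<Sum>i<n. (SOME P. P > 0 \<and> poly (char_poly (mat_delete LLap i i)) 0 = (-1)^(n-1) * P))"
    by (simp add: sum_distrib_left)
  finally have "(\<Sum>i<n. (SOME P. P > 0 \<and> poly (char_poly (mat_delete LLap i i)) 0 = (-1)^(n-1) * P)) = 0"
    using z by simp
  moreover have "(\<Sum>i<n. (SOME P. P > 0 \<and> poly (char_poly (mat_delete LLap i i)) 0 = (-1)^(n-1) * P)) > 0"
  proof (rule sum_pos)
    show "finite {..<n}" by simp
    show "{..<n} \<noteq> {}" using n2 lessThan_empty_iff[of n] by simp
    fix i assume "i \<in> {..<n}"
    then have i: "i < n" by simp
    note M = minor_pd[OF i]
    obtain xs where xs: "sorted xs" "length xs = n - 1" "char_poly (mat_delete LLap i i) = (\<Prod>e\<leftarrow>xs. [:- e, 1:])"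
      using real_split[OF M(2) M(1)] by blast
    have "\<forall>e\<in>set xs. e > 0"
      using root_pd[OF M(2) M(3)] xs(3) poly_lin_prod_zero by metis
    then have "\<exists>P. P > 0 \<and> poly (char_poly (mat_delete LLap i i)) 0 = (-1)^(n-1) * P"
      using xs prod_list_pos poly_lin_prod_0 by metis
    then show "(SOME P. P > 0 \<and> poly (char_poly (mat_delete LLap i i)) 0 = (-1)^(n-1) * P) > 0"
      by (rule someI2_ex) simp
  qed
  ultimately show False by simp
qed


lemma eig_le_rho:
  assumes "eigenvalue LLap e"
  shows "\<bar>e\<bar> \<le> spectral_radius (map_mat complex_of_real LLap)"
proof -
  have "eigenvalue (map_mat complex_of_real LLap) (complex_of_real e)"
    using of_real_hom.eigenvalue_hom[OF Lc assms] .
  then have "norm (complex_of_real e) \<in> norm ` spectrum (map_mat complex_of_real LLap)"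
    unfolding spectrum_def by blast
  moreover have "map_mat complex_of_real LLap \<in> carrier_mat n n" using Lc by simp
  ultimately show ?thesis using spectral_radius_mem_max(2)[of _ n] n2 by fastforce
qed

lemma a_le_rho: "ESv ! 1 \<le> spectral_radius (map_mat complex_of_real LLap)"
proof -
  have "ESv ! 1 \<in> set ESv" using es_len n2 by simp
  then have "eigenvalue LLap (ESv ! 1)" using eig_in_es by simp
  then show ?thesis using eig_le_rho by fastforce
qed

lemma qf_le_rho: "qf LLap n y \<le> spectral_radius (map_mat complex_of_real LLap) * sq n y"
proof -
  define N where "N = mat n n (\<lambda>(i,j). - LLap $$ (i,j))"
  have Nc: "N \<in> carrier_mat n n" unfolding N_def by simp
  have Nidx: "i < n \<Longrightarrow> j < n \<Longrightarrow> N $$ (i,j) = - LLap $$ (i,j)" for i j unfolding N_def by simp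
  have Ns: "symm N n" using Ls unfolding symm_def by (simp add: Nidx)
  obtain s where s: "eigenvalue N s" "\<forall>y. s * sq n y \<le> qf N n y"
    using var_min[OF Nc _ Ns] n2 by auto
  have qN: "qf N n y = - qf LLap n y" for y
    unfolding qf_def by (simp add: Nidx sum_negf[symmetric])
  from s(1) obtain v where "eigenvector N v s" unfolding eigenvalue_def by blast
  then have v: "v \<in> carrier_vec n" "v \<noteq> 0\<^sub>v n" "N *\<^sub>v v = s \<cdot>\<^sub>v v" using Nc unfolding eigenvector_def by auto
  have "LLap *\<^sub>v v = (- s) \<cdot>\<^sub>v v"
  proof (rule eq_vecI)
    fix i assume "i < dim_vec ((- s) \<cdot>\<^sub>v v)"
    then have i: "i < n" using v by simp
    have "(N *\<^sub>v v) $ i = s * v $ i" using v i by simp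
    then have "(\<Sum>j<n. N $$ (i,j) * v $ j) = s * v $ i" using mult_vec_fun[OF Nc v(1) i] by simp
    then have "(\<Sum>j<n. LLap $$ (i,j) * v $ j) = - s * v $ i"
      using i by (simp add: Nidx sum_negf)
    then show "(LLap *\<^sub>v v) $ i = ((- s) \<cdot>\<^sub>v v) $ i" using mult_vec_fun[OF Lc v(1) i] i v by simp
  qed (use Lc v in simp)
  then have "eigenvalue LLap (-s)" unfolding eigenvalue_def eigenvector_def using v Lc by auto
  then have r: "\<bar>s\<bar> \<le> spectral_radius (map_mat complex_of_real LLap)" using eig_le_rho by fastforce
  have "qf LLap n y \<le> - s * sq n y" using spec[OF s(2), of y] qN[of y] by linarith
  also have "\<dots> \<le> spectral_radius (map_mat complex_of_real LLap) * sq n y"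
    using r sq_nonneg[of n y] by (intro mult_right_mono) auto
  finally show ?thesis .
qed

lemma fiedler:
  assumes i: "i < n"
  shows "ESv ! 1 * (real n - 1) \<le> real n * etaG G n $ i"
proof -
  define a where "a = ESv ! 1"
  define N where "N = mat n n (\<lambda>(i,j). LLap $$ (i,j) + a / real n - (if i = j then a else 0))"
  have Nc: "N \<in> carrier_mat n n" unfolding N_def by simp
  have Nidx: "i < n \<Longrightarrow> j < n \<Longrightarrow> N $$ (i,j) = LLap $$ (i,j) + a / real n - (if i = j then a else 0)" for i j
    unfolding N_def by simp
  have Ns: "symm N n" using Ls unfolding symm_def by (simp add: Nidx)
  have npos: "real n > 0" using n2 by simp
  obtain s where s: "eigenvalue N s" "\<forall>y. s * sq n y \<le> qf N n y"
    using var_min[OF Nc _ Ns] n2 by auto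
  have s0: "s \<ge> 0"
  proof (rule ccontr)
    assume "\<not> s \<ge> 0"
    then have sneg: "s < 0" by simp
    from s(1) obtain v where "eigenvector N v s" unfolding eigenvalue_def by blast
    then have v: "v \<in> carrier_vec n" "v \<noteq> 0\<^sub>v n" "N *\<^sub>v v = s \<cdot>\<^sub>v v" using Nc unfolding eigenvector_def by auto
    have Nv: "(\<Sum>j<n. N $$ (k,j) * v $ j) = s * v $ k" if k: "k < n" for k
    proof -
      have "(N *\<^sub>v v) $ k = s * v $ k" using v k by simp
      then show ?thesis using mult_vec_fun[OF Nc v(1) k] by simp
    qed
    define \<sigma> where "\<sigma> = (\<Sum>j<n. v $ j)"
    have colN: "(\<Sum>k<n. N $$ (k,j)) = 0" if j: "j < n" for j
    proof -
      have "(\<Sum>k<n. N $$ (k,j)) = (\<Sum>k<n. LLap $$ (k,j)) + real n * (a / real n) - a"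
        using j by (simp add: Nidx sum.distrib sum_subtractf sum.delta)
      then show ?thesis using col_sum0[OF j] npos by simp
    qed
    have "s * \<sigma> = (\<Sum>k<n. \<Sum>j<n. N $$ (k,j) * v $ j)"
      unfolding \<sigma>_def by (simp add: sum_distrib_left Nv)
    also have "\<dots> = (\<Sum>j<n. \<Sum>k<n. N $$ (k,j) * v $ j)" by (rule sum.swap)
    also have "\<dots> = (\<Sum>j<n. (\<Sum>k<n. N $$ (k,j)) * v $ j)" by (simp add: sum_distrib_right)
    also have "\<dots> = 0" by (simp add: colN)
    finally have sig0: "\<sigma> = 0" using sneg by simp
    have "LLap *\<^sub>v v = (s + a) \<cdot>\<^sub>v v"
    proof (rule eq_vecI)
      fix k assume "k < dim_vec ((s + a) \<cdot>\<^sub>v v)"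
      then have k: "k < n" using v by simp
      have "(\<Sum>j<n. N $$ (k,j) * v $ j) = (\<Sum>j<n. LLap $$ (k,j) * v $ j + (a / real n) * v $ j - (if j = k then a * v $ j else 0))"
      proof (rule sum.cong[OF refl])
        fix j assume "j \<in> {..<n}"
        then have j: "j < n" by simp
        show "N $$ (k,j) * v $ j = LLap $$ (k,j) * v $ j + (a / real n) * v $ j - (if j = k then a * v $ j else 0)"
          unfolding Nidx[OF k j] by (cases "j = k") (simp_all add: distrib_right left_diff_distrib)
      qed
      also have "\<dots> = (\<Sum>j<n. LLap $$ (k,j) * v $ j) + a / real n * \<sigma> - a * v $ k"
        using k unfolding \<sigma>_def by (simp add: sum.distrib sum_subtractf sum_distrib_left sum.delta)
      finally have "(\<Sum>j<n. N $$ (k,j) * v $ j) = (\<Sum>j<n. LLap $$ (k,j) * v $ j) + a / real n * \<sigma> - a * v $ k" .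
      then have "(\<Sum>j<n. LLap $$ (k,j) * v $ j) = (s + a) * v $ k" using Nv[OF k] sig0 by (simp add: algebra_simps)
      then show "(LLap *\<^sub>v v) $ k = ((s + a) \<cdot>\<^sub>v v) $ k" using mult_vec_fun[OF Lc v(1) k] k v by simp
    qed (use Lc v in simp)
    then have ev: "eigenvalue LLap (s + a)" unfolding eigenvalue_def eigenvector_def using v Lc by auto
    then obtain k where k: "k < length ESv" "ESv ! k = s + a" using eig_in_es by (metis in_set_conv_nth)
    have "k = 0"
    proof (rule ccontr)
      assume "k \<noteq> 0"
      then have "ESv ! 1 \<le> ESv ! k" using sorted_nth_mono[OF es_sorted _ k(1)] by simp
      then show False using k sneg unfolding a_def by simp
    qed
    then have sa: "s + a = 0" using k es0 by simp
    have "qf LLap n (\<lambda>i. v $ i) = 0"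
      using eig_qf[OF Lc v(1)] \<open>LLap *\<^sub>v v = (s + a) \<cdot>\<^sub>v v\<close> sa by simp
    then have const: "\<forall>i<n. v $ i = v $ 0" using Lzero n2 by auto
    have "\<sigma> = (\<Sum>j<n. v $ 0)" unfolding \<sigma>_def
    proof (rule sum.cong[OF refl])
      fix j assume "j \<in> {..<n}"
      then show "v $ j = v $ 0" using const lessThan_iff by blast
    qed
    then have "\<sigma> = real n * v $ 0" by simp
    then have v00: "v $ 0 = 0" using sig0 npos by simp
    have "v = 0\<^sub>v n"
    proof (rule eq_vecI)
      fix j assume "j < dim_vec (0\<^sub>v n :: real vec)"
      then have "j < n" by simp
      then have "v $ j = v $ 0" using const by blast
      then show "v $ j = (0\<^sub>v n :: real vec) $ j" using v00 \<open>j < n\<close> by simp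
    qed (use v(1) in simp)
    then show False using v(2) by simp
  qed
  define y where "y k = (if k = i then 1 else (0::real))" for k
  have sqy: "sq n y = 1"
  proof -
    have "sq n y = (\<Sum>k<n. if k = i then 1 else 0)" unfolding sq_def y_def by (rule sum.cong) auto
    also have "\<dots> = 1" using i by (simp add: sum.delta)
    finally show ?thesis .
  qed
  have qfy: "qf N n y = N $$ (i,i)"
  proof -
    have "qf N n y = (\<Sum>a<n. (\<Sum>b<n. N $$ (a,b) * y b) * y a)"
      unfolding qf_def sum_distrib_right by (intro sum.cong refl) (simp add: mult.commute mult.left_commute)
    also have "\<dots> = (\<Sum>a<n. N $$ (a,i) * y a)"
      unfolding y_def using i by (simp only: sum_ind) simp
    also have "\<dots> = N $$ (i,i)"
      unfolding y_def using i by (simp only: sum_ind) simp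
    finally show ?thesis .
  qed
  have "N $$ (i,i) = etaG G n $ i + a / real n - a" using i Gd by (simp add: Nidx Lidx)
  then have "0 \<le> etaG G n $ i + a / real n - a" using s(2) sqy qfy s0 by (metis mult_1_right order_trans)
  then have "0 \<le> real n * (etaG G n $ i + a / real n - a)" using npos by simp
  then show ?thesis unfolding a_def using npos by (simp add: algebra_simps)
qed
end



theorem lemma4p6:
  fixes n :: nat and \<Gamma> :: "real mat" and lam mu :: real and Pinv :: "real mat" and \<theta> :: complex
  assumes n2: "n \<ge> 2"
    and \<Gamma>_dim: "\<Gamma> \<in> carrier_mat n n"
    and \<Gamma>_sym: "transpose_mat \<Gamma> = \<Gamma>"
    and \<Gamma>_range: "\<forall>i<n. \<forall>j<n. 0 \<le> \<Gamma> $$ (i, j) \<and> \<Gamma> $$ (i, j) \<le> 1"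
    and \<Gamma>_diag: "\<forall>i<n. \<Gamma> $$ (i, i) = 0"
    and \<Gamma>_rows: "\<forall>i<n. \<exists>j<n. j \<noteq> i \<and> \<Gamma> $$ (i, j) > 0"
    and \<Gamma>_conn: "weight_graph_connected n \<Gamma>"
    and lam_pos: "lam > 0" and mu_pos: "mu > 0"
    and Pinv_dim: "Pinv \<in> carrier_mat n n"
    and Pinv_inv: "let \<eta> = \<Gamma> *\<^sub>v vec n (\<lambda>_. 1);
                       L = mat_diag n (\<lambda>i. \<eta> $ i) - \<Gamma>;
                       A = lam \<cdot>\<^sub>m 1\<^sub>m n + mu \<cdot>\<^sub>m L;
                       Pa = mat_diag n (\<lambda>i. A $$ (i, i))
                   in Pinv * Pa = 1\<^sub>m n \<and> Pa * Pinv = 1\<^sub>m n"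
    and eig: "let \<eta> = \<Gamma> *\<^sub>v vec n (\<lambda>_. 1);
                  L = mat_diag n (\<lambda>i. \<eta> $ i) - \<Gamma>;
                  A = lam \<cdot>\<^sub>m 1\<^sub>m n + mu \<cdot>\<^sub>m L
              in eigenvalue (map_mat complex_of_real (Pinv * A)) \<theta>"
  shows "let \<eta> = \<Gamma> *\<^sub>v vec n (\<lambda>_. 1);
             L = mat_diag n (\<lambda>i. \<eta> $ i) - \<Gamma>
         in \<theta> \<in> \<real> \<and>
            lam / (lam + mu * Max {\<eta> $ i | i. i < n}) \<le> Re \<theta> \<and>
            Re \<theta> \<le> min 2 (real n / (real n - 1) *
                   (spectral_radius (map_mat complex_of_real L) / algebraic_connectivity L))"
proof -
  have Gnn: "\<forall>i<n. \<forall>j<n. 0 \<le> \<Gamma> $$ (i,j)" using \<Gamma>_range by auto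
  note ctx = \<Gamma>_dim \<Gamma>_sym Gnn \<Gamma>_diag \<Gamma>_conn n2
  define \<eta> where "\<eta> = etaG \<Gamma> n"
  define L where "L = LapG \<Gamma> n"
  define A where "A = lam \<cdot>\<^sub>m 1\<^sub>m n + mu \<cdot>\<^sub>m L"
  define Pa where "Pa = mat_diag n (\<lambda>i. A $$ (i, i))"
  have Ldef: "mat_diag n (\<lambda>i. (\<Gamma> *\<^sub>v vec n (\<lambda>_. 1)) $ i) - \<Gamma> = L"
    unfolding L_def LapG_def etaG_def ..
  have Pinv_inv': "Pinv * Pa = 1\<^sub>m n \<and> Pa * Pinv = 1\<^sub>m n"
    using Pinv_inv unfolding Let_def Ldef A_def[symmetric] Pa_def[symmetric] .
  have eig': "eigenvalue (map_mat complex_of_real (Pinv * A)) \<theta>"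
    using eig unfolding Let_def Ldef A_def[symmetric] .
  have Lc: "L \<in> carrier_mat n n" unfolding L_def using Lc[OF ctx] .
  have Ac: "A \<in> carrier_mat n n" unfolding A_def using Lc by simp
  have Pac: "Pa \<in> carrier_mat n n" unfolding Pa_def by simp
  have npos: "n > 0" using n2 by simp
  have eta_nn: "\<eta> $ i \<ge> 0" if "i < n" for i
    unfolding \<eta>_def using eta_i[OF \<Gamma>_dim \<Gamma>_sym Gnn that] Gnn that by (auto intro!: sum_nonneg)
  have Aidx: "A $$ (i,j) = lam * (if i = j then 1 else 0) + mu * L $$ (i,j)" if "i < n" "j < n" for i j
    unfolding A_def using that Lc by auto
  have Lidx': "L $$ (i,j) = (if i = j then \<eta> $ i else 0) - \<Gamma> $$ (i,j)" if "i < n" "j < n" for i j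
    unfolding L_def \<eta>_def using Lidx[OF ctx that] .
  define d where "d i = lam + mu * \<eta> $ i" for i
  have Aii: "A $$ (i,i) = d i" if "i < n" for i
    using that \<Gamma>_diag by (simp add: Aidx Lidx' d_def)
  have dpos: "d i > 0" if "i < n" for i
    unfolding d_def using eta_nn[OF that] lam_pos mu_pos by (simp add: add_pos_nonneg)
  have Asym: "A $$ (i,j) = A $$ (j,i)" if "i < n" "j < n" for i j
    using Ls[OF ctx] that unfolding symm_def L_def[symmetric] by (simp add: Aidx)
  from eig' obtain v where "eigenvector (map_mat complex_of_real (Pinv * A)) v \<theta>" unfolding eigenvalue_def by blast
  then have v: "v \<in> carrier_vec n" "v \<noteq> 0\<^sub>v n" "map_mat complex_of_real (Pinv * A) *\<^sub>v v = \<theta> \<cdot>\<^sub>v v"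
    unfolding eigenvector_def using Pinv_dim Ac by auto
  have PPA: "Pa * (Pinv * A) = A"
    using assoc_mult_mat[OF Pac Pinv_dim Ac] Pinv_inv' Ac by simp
  have Aceq: "map_mat complex_of_real A *\<^sub>v v = map_mat complex_of_real Pa *\<^sub>v (\<theta> \<cdot>\<^sub>v v)"
  proof -
    have "map_mat complex_of_real A = map_mat complex_of_real Pa * map_mat complex_of_real (Pinv * A)"
      using PPA of_real_hom.mat_hom_mult[OF Pac mult_carrier_mat[OF Pinv_dim Ac]] by simp
    then have "map_mat complex_of_real A *\<^sub>v v = map_mat complex_of_real Pa *\<^sub>v (map_mat complex_of_real (Pinv * A) *\<^sub>v v)"
      using assoc_mult_mat_vec[of "map_mat complex_of_real Pa" n n "map_mat complex_of_real (Pinv * A)" n v] Pac Pinv_dim Ac v(1)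
      by simp
    then show ?thesis using v(3) by simp
  qed
  define x where "x j = Re (v $ j)" for j
  define y where "y j = Im (v $ j)" for j
  define p where "p = Re \<theta>"
  define q where "q = Im \<theta>"
  have comp: "(\<Sum>j<n. complex_of_real (A $$ (i,j)) * v $ j) = complex_of_real (d i) * (\<theta> * v $ i)" if i: "i < n" for i
  proof -
    have "(map_mat complex_of_real A *\<^sub>v v) $ i = (\<Sum>j<n. complex_of_real (A $$ (i,j)) * v $ j)"
      using i Ac v(1) by (auto simp: scalar_prod_def lessThan_atLeast0 intro!: sum.cong)
    moreover have "(map_mat complex_of_real Pa *\<^sub>v (\<theta> \<cdot>\<^sub>v v)) $ i = (\<Sum>j<n. complex_of_real (Pa $$ (i,j)) * (\<theta> * v $ j))"
      using i Pac v(1) by (auto simp: scalar_prod_def lessThan_atLeast0 intro!: sum.cong)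
    moreover have "(\<Sum>j<n. complex_of_real (Pa $$ (i,j)) * (\<theta> * v $ j)) = (\<Sum>j<n. if j = i then complex_of_real (d i) * (\<theta> * v $ i) else 0)"
      by (rule sum.cong[OF refl]) (use i in \<open>auto simp: Pa_def mat_diag_def Aii\<close>)
    moreover have "\<dots> = complex_of_real (d i) * (\<theta> * v $ i)" using i by (simp add: sum.delta)
    ultimately show ?thesis using Aceq by simp
  qed
  have E1: "(\<Sum>j<n. A $$ (i,j) * x j) = d i * (p * x i - q * y i)" if i: "i < n" for i
    using arg_cong[OF comp[OF i], of Re] unfolding x_def y_def p_def q_def by (simp add: Re_sum algebra_simps)
  have E2: "(\<Sum>j<n. A $$ (i,j) * y j) = d i * (p * y i + q * x i)" if i: "i < n" for i
    using arg_cong[OF comp[OF i], of Im] unfolding x_def y_def p_def q_def by (simp add: Im_sum algebra_simps)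

  define D where "D = (\<Sum>i<n. d i * (x i ^ 2 + y i ^ 2))"
  define S where "S = sq n x + sq n y"
  define E where "E = (\<Sum>i<n. \<eta> $ i * (x i ^ 2 + y i ^ 2))"
  define Q where "Q = qf L n x + qf L n y"
  define B where "B u w = (\<Sum>i<n. u i * (\<Sum>j<n. A $$ (i,j) * w j))" for u w
  have Bsym: "B u w = B w u" for u w
  proof -
    have "B u w = (\<Sum>i<n. \<Sum>j<n. u i * A $$ (i,j) * w j)" unfolding B_def by (simp add: sum_distrib_left mult.assoc)
    also have "\<dots> = (\<Sum>j<n. \<Sum>i<n. u i * A $$ (i,j) * w j)" by (rule sum.swap)
    also have "\<dots> = (\<Sum>j<n. \<Sum>i<n. w j * A $$ (j,i) * u i)" using Asym by (auto intro!: sum.cong)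
    also have "\<dots> = B w u" unfolding B_def by (simp add: sum_distrib_left mult.assoc)
    finally show ?thesis .
  qed
  have qfB: "qf A n u = B u u" for u unfolding qf_def B_def by (simp add: sum_distrib_left mult.assoc)
  have "q * D = B x y - B y x"
  proof -
    have "B x y - B y x = (\<Sum>i<n. x i * (d i * (p * y i + q * x i)) - y i * (d i * (p * x i - q * y i)))"
      unfolding B_def sum_subtractf[symmetric] by (rule sum.cong[OF refl]) (simp add: E1 E2)
    also have "\<dots> = q * D" unfolding D_def sum_distrib_left
      by (rule sum.cong[OF refl]) (simp add: algebra_simps power2_eq_square)
    finally show ?thesis by simp
  qed
  then have qD: "q * D = 0" using Bsym by simp
  have pD: "B x x + B y y = p * D"
  proof -
    have "B x x + B y y = (\<Sum>i<n. x i * (d i * (p * x i - q * y i)) + y i * (d i * (p * y i + q * x i)))"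
      unfolding B_def sum.distrib[symmetric] by (rule sum.cong[OF refl]) (simp add: E1 E2)
    also have "\<dots> = p * D" unfolding D_def sum_distrib_left
      by (rule sum.cong[OF refl]) (simp add: algebra_simps power2_eq_square)
    finally show ?thesis .
  qed
  have qfA: "qf A n u = lam * sq n u + mu * qf L n u" for u
  proof -
    have "qf A n u = (\<Sum>i<n. \<Sum>j<n. (if j = i then lam * (u i * u j) else 0) + mu * (u i * L $$ (i,j) * u j))"
      unfolding qf_def by (intro sum.cong refl) (auto simp: Aidx algebra_simps)
    also have "\<dots> = lam * sq n u + mu * qf L n u"
      unfolding qf_def sq_def by (simp add: sum.distrib sum_distrib_left sum.delta power2_eq_square)
    finally show ?thesis .
  qed
  have DSE: "D = lam * S + mu * E"
    unfolding D_def S_def E_def sq_def d_def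
    by (simp add: sum.distrib sum_distrib_left algebra_simps)
  have Snn: "\<And>i. x i ^ 2 + y i ^ 2 \<ge> 0" by simp
  have Spos: "S > 0"
  proof -
    from v obtain k where k: "k < n" "v $ k \<noteq> 0" by (metis eq_vecI index_zero_vec(1) index_zero_vec(2) carrier_vecD)
    then have "x k ^ 2 + y k ^ 2 > 0" unfolding x_def y_def
      by (metis complex_eqI sum_power2_gt_zero_iff zero_complex.simps(1) zero_complex.simps(2))
    moreover have "x k ^ 2 + y k ^ 2 \<le> (\<Sum>i<n. x i ^ 2 + y i ^ 2)"
      by (rule member_le_sum[where f="\<lambda>i. x i ^ 2 + y i ^ 2"]) (use k in auto)
    moreover have "S = (\<Sum>i<n. x i ^ 2 + y i ^ 2)" unfolding S_def sq_def by (simp add: sum.distrib)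
    ultimately show ?thesis by linarith
  qed
  have Enn: "E \<ge> 0" unfolding E_def using eta_nn by (auto intro!: sum_nonneg)
  have Dpos: "D > 0" unfolding DSE using Spos Enn lam_pos mu_pos by (simp add: add_pos_nonneg)
  have q0: "q = 0" using qD Dpos by simp
  have pval: "p * D = lam * S + mu * Q"
    using pD qfB[of x] qfB[of y] qfA[of x] qfA[of y] unfolding S_def Q_def by (simp add: algebra_simps)
  have Qnn: "Q \<ge> 0" unfolding Q_def L_def using Lpsd[OF ctx] by (simp add: add_nonneg_nonneg)
  have Qle2: "Q \<le> 2 * E"
  proof -
    have "qf L n x \<le> 2 * (\<Sum>i<n. \<eta> $ i * x i ^ 2)" "qf L n y \<le> 2 * (\<Sum>i<n. \<eta> $ i * y i ^ 2)"
      unfolding L_def \<eta>_def using qf_L_le[OF \<Gamma>_dim \<Gamma>_sym Gnn] by auto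
    then show ?thesis unfolding Q_def E_def by (simp add: sum.distrib algebra_simps)
  qed
  define \<rho> where "\<rho> = spectral_radius (map_mat complex_of_real L)"
  define a where "a = algebraic_connectivity L"
  have a_def': "a = sorted_real_eigenvalues (LapG \<Gamma> n) ! 1" unfolding a_def algebraic_connectivity_def L_def ..
  have apos: "a > 0" unfolding a_def' using es1_pos[OF ctx] .
  have arho: "a \<le> \<rho>" unfolding a_def' \<rho>_def L_def using a_le_rho[OF ctx] .
  have Qrho: "Q \<le> \<rho> * S"
    unfolding Q_def S_def \<rho>_def L_def using qf_le_rho[OF ctx, of x] qf_le_rho[OF ctx, of y] by (simp add: algebra_simps)
  have EgeS: "a * (real n - 1) / real n * S \<le> E"
  proof -
    have "a * (real n - 1) / real n * S = (\<Sum>i<n. a * (real n - 1) / real n * (x i ^ 2 + y i ^ 2))"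
      unfolding S_def sq_def by (simp add: sum.distrib sum_distrib_left algebra_simps)
    also have "\<dots> \<le> E" unfolding E_def
    proof (rule sum_mono)
      fix i assume "i \<in> {..<n}"
      then have i: "i < n" by simp
      have "a * (real n - 1) \<le> real n * \<eta> $ i" unfolding a_def' \<eta>_def using fiedler[OF ctx i] .
      then have "a * (real n - 1) / real n \<le> \<eta> $ i" using npos by (simp add: divide_le_eq mult.commute)
      then show "a * (real n - 1) / real n * (x i ^ 2 + y i ^ 2) \<le> \<eta> $ i * (x i ^ 2 + y i ^ 2)"
        by (rule mult_right_mono) simp
    qed
    finally show ?thesis .
  qed
  define M where "M = Max {\<eta> $ i | i. i < n}"
  have setfin: "{\<eta> $ i | i. i < n} = (\<lambda>i. \<eta> $ i) ` {..<n}" by auto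
  have Mge: "\<eta> $ i \<le> M" if "i < n" for i
    unfolding M_def setfin using that by (intro Max_ge) auto
  have Mnn: "M \<ge> 0" using Mge[of 0] eta_nn[of 0] npos by simp
  have EleM: "E \<le> M * S"
  proof -
    have "E \<le> (\<Sum>i<n. M * (x i ^ 2 + y i ^ 2))" unfolding E_def
      by (rule sum_mono, rule mult_right_mono) (auto simp: Mge)
    also have "\<dots> = M * S" unfolding S_def sq_def by (simp add: sum.distrib sum_distrib_left distrib_left)
    finally show ?thesis .
  qed
  define R where "R = real n / (real n - 1) * (\<rho> / a)"
  have n1: "real n - 1 > 0" using n2 by simp
  have R1: "R \<ge> 1"
  proof -
    have "\<rho> / a \<ge> 1" using arho apos by simp
    moreover have "real n / (real n - 1) \<ge> 1" using n1 by simp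
    ultimately show ?thesis unfolding R_def using one_le_mult_iff by (metis mult_mono' zero_le_one order_trans mult_1_left)
  qed
  have RE: "R * (a * (real n - 1) / real n) = \<rho>" unfolding R_def using apos n1 npos by (simp add: field_simps)
  have up2: "p \<le> 2"
  proof -
    have "mu * Q \<le> mu * (2 * E)" using Qle2 mu_pos by (intro mult_left_mono) auto
    moreover have "lam * S \<ge> 0" using lam_pos Spos by simp
    ultimately have "lam * S + mu * Q \<le> 2 * (lam * S + mu * E)" by (simp add: algebra_simps)
    then have "p * D \<le> 2 * D" using pval DSE by simp
    then show ?thesis using Dpos by simp
  qed
  have upR: "p \<le> R"
  proof -
    have "mu * Q \<le> mu * (R * E)"
    proof -
      have "Q \<le> \<rho> * S" by (rule Qrho)
      also have "\<rho> * S = R * (a * (real n - 1) / real n * S)" using RE by (metis mult.assoc)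
      also have "\<dots> \<le> R * E" using EgeS R1 by (intro mult_left_mono) auto
      finally show ?thesis using mu_pos by simp
    qed
    moreover have "lam * S \<le> R * (lam * S)" using R1 lam_pos Spos by simp
    ultimately have "lam * S + mu * Q \<le> R * (lam * S + mu * E)" by (simp add: algebra_simps)
    then have "p * D \<le> R * D" using pval DSE by simp
    then show ?thesis using Dpos by simp
  qed
  have low: "lam / (lam + mu * M) \<le> p"
  proof -
    have c: "lam + mu * M > 0" using lam_pos mu_pos Mnn by (simp add: add_pos_nonneg)
    have "lam * D \<le> lam * ((lam + mu * M) * S)"
      unfolding DSE using EleM lam_pos mu_pos by (simp add: algebra_simps)
    also have "\<dots> = (lam * S) * (lam + mu * M)" by simp
    also have "\<dots> \<le> (p * D) * (lam + mu * M)" unfolding pval using Qnn mu_pos c by (intro mult_right_mono) auto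
    finally have "lam * D \<le> p * (lam + mu * M) * D" by (simp add: ac_simps)
    then have "lam \<le> p * (lam + mu * M)" using Dpos by simp
    then show ?thesis using c by (simp add: divide_le_eq mult.commute)
  qed
  have thR: "\<theta> \<in> \<real>" using q0 unfolding q_def by (simp add: complex_is_Real_iff)
  have "\<theta> \<in> \<real> \<and> lam / (lam + mu * M) \<le> Re \<theta> \<and> Re \<theta> \<le> min 2 R"
    using thR low up2 upR unfolding p_def by simp
  then show ?thesis
    unfolding Let_def Ldef M_def R_def \<rho>_def a_def \<eta>_def etaG_def by simp
qed

end
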